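(* Let $S=\mathbb{1}(Y\neq 0)$ (test-negative design sampling, where only units with $S=1$ are observed). Then, provided the conditional probabilities involved are well defined with positive denominators, $$\Psi_{om}=\Psi^*_{om}\equiv\frac{\mathbb{E}[V\mathbb{1}(Y=2)\mid S=1]}{\mathbb{E}\!\left[V\mathbb{1}(Y=1)\dfrac{\Pr(Y=2\mid S=1,V=0,X)}{\Pr(Y=1\mid S=1,V=0,X)}\,\Big|\,S=1\right]}$$ and $$\Psi_{ipw}=\Psi^*_{ipw}\equiv\frac{\mathbb{E}[V\mathbb{1}(Y=2)\mid S=1]}{\mathbb{E}\!\left[(1-V)\mathbb{1}(Y=2)\dfrac{\Pr(V=1\mid S=1,Y=1,X)}{\Pr(V=0\mid S=1,Y=1,X)}\,\Big|\,S=1\right]},$$ where $\Psi_{om}=\dfrac{\mathbb{E}[V\mathbb{1}(Y=2)]}{\mathbb{E}[V\mathbb{1}(Y=1)\Pr(Y=2\mid V=0,X)/\Pr(Y=1\mid V=0,X)]}$ and $\Psi_{ipw}=\dfrac{\mathbb{E}[V\mathbb{1}(Y=2)]}{\mathbb{E}[(1-V)\mathbb{1}(Y=2)\Pr(V=1\mid Y=1,X)/\Pr(V=0\mid Y=1,X)]}$. Consequently, under (A1)–(A4), $\Psi=\Psi^*_{om}=\Psi^*_{ipw}$, so $\Psi$ is identified from the law of $(X,V,Y)$ given $S=1$.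
   Context: Let $X$ be a vector of baseline covariates, $V\in\{0,1\}$ a vaccination indicator, and $Y\in\{0,1,2\}$ an outcome ($Y=2$: tested and positive for the pathogen of interest; $Y=1$: tested and negative; $Y=0$: not tested). For $v\in\{0,1\}$, $Y^v$ is the potential outcome of $Y$ under $V=v$. All variables live on one probability space (the underlying cohort), with $\Pr,\mathbb{E}$ its law. $\Psi=\Pr(Y^1=2\mid V=1)/\Pr(Y^0=2\mid V=1)$. Assumptions: (A1) Consistency: $Y=Y^v$ whenever $V=v$. (A2) $\Pr(Y^0=1\mid V=1,X)=\Pr(Y^1=1\mid V=1,X)$ almost surely. (A3) Odds ratio equi-confounding: $OR_2(X)=OR_1(X)$ a.s., where $OR_y(X)=\dfrac{\Pr(Y^0=y\mid V=1,X)\Pr(Y^0=0\mid V=0,X)}{\Pr(Y^0=0\mid V=1,X)\Pr(Y^0=y\mid V=0,X)}$. (A4) Overlap: letting $\mathcal S_y(v)$ denote the support of the law of $(Y^0=y,V=v,X)$, $\mathcal S_2(1)\subseteq\mathcal S_2(0)$ and $\mathcal S_2(v)\subseteq\mathcal S_1(v)$ for $v\in\{0,1\}$; all conditional probabilities appearing in denominators are positive where required. *)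

theory Defs
  imports "HOL-Probability.Probability"
begin

definition cprob :: "'a measure \<Rightarrow> 'a set \<Rightarrow> 'a set \<Rightarrow> real" where
  "cprob M A B = measure M (A \<inter> B) / measure M B"

definition cexp_ev :: "'a measure \<Rightarrow> ('a \<Rightarrow> real) \<Rightarrow> 'a set \<Rightarrow> real" where
  "cexp_ev M f B = (\<integral>\<omega>. f \<omega> * indicator B \<omega> \<partial>M) / measure M B"

definition sigX :: "'a measure \<Rightarrow> ('a \<Rightarrow> 'b) \<Rightarrow> 'b measure \<Rightarrow> 'a measure" where
  "sigX M X N = vimage_algebra (space M) X N"

definition cprobX :: "'a measure \<Rightarrow> ('a \<Rightarrow> 'b) \<Rightarrow> 'b measure \<Rightarrow> 'a set \<Rightarrow> 'a set \<Rightarrow> 'a \<Rightarrow> real" where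
  "cprobX M X N A B = (\<lambda>\<omega>. real_cond_exp M (sigX M X N) (indicator (A \<inter> B)) \<omega>
                           / real_cond_exp M (sigX M X N) (indicator B) \<omega>)"

definition ev :: "'a measure \<Rightarrow> ('a \<Rightarrow> 'c) \<Rightarrow> 'c \<Rightarrow> 'a set" where
  "ev M Z k = {\<omega> \<in> space M. Z \<omega> = k}"

definition OR :: "'a measure \<Rightarrow> ('a \<Rightarrow> 'b) \<Rightarrow> 'b measure \<Rightarrow> ('a \<Rightarrow> real) \<Rightarrow> ('a \<Rightarrow> nat) \<Rightarrow> nat \<Rightarrow> 'a \<Rightarrow> real" where
  "OR M X N V Y0 y = (\<lambda>\<omega>.
     (cprobX M X N (ev M Y0 y) (ev M V 1) \<omega> * cprobX M X N (ev M Y0 0) (ev M V 0) \<omega>)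
   / (cprobX M X N (ev M Y0 0) (ev M V 1) \<omega> * cprobX M X N (ev M Y0 y) (ev M V 0) \<omega>))"

definition Psi :: "'a measure \<Rightarrow> ('a \<Rightarrow> real) \<Rightarrow> ('a \<Rightarrow> nat) \<Rightarrow> ('a \<Rightarrow> nat) \<Rightarrow> real" where
  "Psi M V Y0 Y1 = cprob M (ev M Y1 2) (ev M V 1) / cprob M (ev M Y0 2) (ev M V 1)"

definition Psi_om :: "'a measure \<Rightarrow> ('a \<Rightarrow> 'b) \<Rightarrow> 'b measure \<Rightarrow> ('a \<Rightarrow> real) \<Rightarrow> ('a \<Rightarrow> nat) \<Rightarrow> real" where
  "Psi_om M X N V Y =
     (\<integral>\<omega>. V \<omega> * indicator (ev M Y 2) \<omega> \<partial>M)
   / (\<integral>\<omega>. V \<omega> * indicator (ev M Y 1) \<omega>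
          * (cprobX M X N (ev M Y 2) (ev M V 0) \<omega> / cprobX M X N (ev M Y 1) (ev M V 0) \<omega>) \<partial>M)"

definition Psi_ipw :: "'a measure \<Rightarrow> ('a \<Rightarrow> 'b) \<Rightarrow> 'b measure \<Rightarrow> ('a \<Rightarrow> real) \<Rightarrow> ('a \<Rightarrow> nat) \<Rightarrow> real" where
  "Psi_ipw M X N V Y =
     (\<integral>\<omega>. V \<omega> * indicator (ev M Y 2) \<omega> \<partial>M)
   / (\<integral>\<omega>. (1 - V \<omega>) * indicator (ev M Y 2) \<omega>
          * (cprobX M X N (ev M V 1) (ev M Y 1) \<omega> / cprobX M X N (ev M V 0) (ev M Y 1) \<omega>) \<partial>M)"

definition Ssel :: "'a measure \<Rightarrow> ('a \<Rightarrow> nat) \<Rightarrow> 'a set" where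
  "Ssel M Y = {\<omega> \<in> space M. Y \<omega> \<noteq> 0}"

definition Psi_om_star :: "'a measure \<Rightarrow> ('a \<Rightarrow> 'b) \<Rightarrow> 'b measure \<Rightarrow> ('a \<Rightarrow> real) \<Rightarrow> ('a \<Rightarrow> nat) \<Rightarrow> real" where
  "Psi_om_star M X N V Y =
     cexp_ev M (\<lambda>\<omega>. V \<omega> * indicator (ev M Y 2) \<omega>) (Ssel M Y)
   / cexp_ev M (\<lambda>\<omega>. V \<omega> * indicator (ev M Y 1) \<omega>
          * (cprobX M X N (ev M Y 2) (Ssel M Y \<inter> ev M V 0) \<omega>
             / cprobX M X N (ev M Y 1) (Ssel M Y \<inter> ev M V 0) \<omega>)) (Ssel M Y)"

definition Psi_ipw_star :: "'a measure \<Rightarrow> ('a \<Rightarrow> 'b) \<Rightarrow> 'b measure \<Rightarrow> ('a \<Rightarrow> real) \<Rightarrow> ('a \<Rightarrow> nat) \<Rightarrow> real" where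
  "Psi_ipw_star M X N V Y =
     cexp_ev M (\<lambda>\<omega>. V \<omega> * indicator (ev M Y 2) \<omega>) (Ssel M Y)
   / cexp_ev M (\<lambda>\<omega>. (1 - V \<omega>) * indicator (ev M Y 2) \<omega>
          * (cprobX M X N (ev M V 1) (Ssel M Y \<inter> ev M Y 1) \<omega>
             / cprobX M X N (ev M V 0) (Ssel M Y \<inter> ev M Y 1) \<omega>)) (Ssel M Y)"

end

theory Submission
  imports Defs
begin

lemma alg:
  fixes p0 p1 p2 q0 q1 r a b c0 :: real
  assumes A2: "p1/q1 = r/q1"
    and A3: "((p2/q1)*(c0/q0))/((p0/q1)*(a/q0)) = ((p1/q1)*(c0/q0))/((p0/q1)*(b/q0))"
    and pos: "p0/q1 > 0" "c0/q0 > 0" "b/q0 > 0" "a/q0 > 0"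
  shows "p2 = r * a / b"
proof -
  have nz: "q1 \<noteq> 0" "q0 \<noteq> 0" "p0 \<noteq> 0" "c0 \<noteq> 0" "b \<noteq> 0" "a \<noteq> 0" using pos by auto
  have "p1 = r" using A2 nz by (simp add: field_simps)
  with A3 nz show ?thesis by (simp add: field_simps)
qed

locale ctx = prob_space M for M :: "'a measure" +
  fixes X :: "'a \<Rightarrow> 'b" and N :: "'b measure"
  assumes Xm: "X \<in> measurable M N"
begin

lemma subalgF: "subalgebra M (sigX M X N)"
  unfolding subalgebra_def sigX_def
proof
  show "space (vimage_algebra (space M) X N) = space M" by simp
  have "X \<in> space M \<rightarrow> space N" using Xm by (simp add: measurable_def)
  then show "sets (vimage_algebra (space M) X N) \<subseteq> sets M"
    using Xm by (auto simp: sets_vimage_algebra2 measurable_sets)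
qed

sublocale F: finite_measure_subalgebra M "sigX M X N"
  by unfold_locales (rule subalgF)

lemma int_ind[simp,intro]: "A \<in> sets M \<Longrightarrow> integrable M (indicator A :: 'a \<Rightarrow> real)"
  by (intro integrable_real_indicator) (auto simp: less_top[symmetric])

abbreviation E :: "'a set \<Rightarrow> 'a \<Rightarrow> real" where
  "E A \<equiv> real_cond_exp M (sigX M X N) (indicator A)"

lemma E_nonneg: "A \<in> sets M \<Longrightarrow> AE x in M. 0 \<le> E A x"
  by (intro F.real_cond_exp_pos) auto

lemma E_mono: "A \<in> sets M \<Longrightarrow> B \<in> sets M \<Longrightarrow> A \<subseteq> B \<Longrightarrow> AE x in M. E A x \<le> E B x"
  by (intro F.real_cond_exp_mono) (auto simp: indicator_def)

lemma E_int: "A \<in> sets M \<Longrightarrow> (\<integral>x. E A x \<partial>M) = measure M A"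
  using F.real_cond_exp_int(2)[of "indicator A"] by simp

lemma nn_E: assumes A[measurable]: "A \<in> sets M"
  shows "AE x in M. nn_cond_exp M (sigX M X N) (\<lambda>x. ennreal (indicator A x)) x = ennreal (E A x)"
proof -
  have eq0: "(\<lambda>x. ennreal (- indicator A x)) = (\<lambda>x. 0)"
    by (auto simp: indicator_def fun_eq_iff ennreal_neg)
  have "AE x in M. nn_cond_exp M (sigX M X N) (\<lambda>x. ennreal (indicator A x)) x \<le> nn_cond_exp M (sigX M X N) (\<lambda>x. 1) x"
    by (intro F.nn_cond_exp_mono) (auto simp: indicator_def)
  moreover have "AE x in M. 1 = nn_cond_exp M (sigX M X N) (\<lambda>x. 1::ennreal) x"
    by (intro F.nn_cond_exp_F_meas) auto
  moreover have "AE x in M. 0 = nn_cond_exp M (sigX M X N) (\<lambda>x. 0::ennreal) x"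
    by (intro F.nn_cond_exp_F_meas) auto
  ultimately have "AE x in M. nn_cond_exp M (sigX M X N) (\<lambda>x. ennreal (indicator A x)) x \<noteq> \<infinity>
     \<and> nn_cond_exp M (sigX M X N) (\<lambda>x. 0) x = 0"
  proof eventually_elim
    case (elim x)
    then have "nn_cond_exp M (sigX M X N) (\<lambda>x. ennreal (indicator A x)) x \<le> 1" by simp
    then have "nn_cond_exp M (sigX M X N) (\<lambda>x. ennreal (indicator A x)) x \<noteq> \<infinity>"
      by (auto simp: top_unique)
    with elim show ?case by simp
  qed
  then show ?thesis
    unfolding real_cond_exp_def eq0
    by (rule eventually_mono) (simp add: ennreal_enn2real_if)
qed

lemma tower:
  assumes f[measurable]: "f \<in> borel_measurable (sigX M X N)" and fpos: "AE x in M. 0 \<le> f x"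
    and A[measurable]: "A \<in> sets M" and h: "integrable M h"
    and fh: "AE x in M. f x * E A x = h x"
  shows "integrable M (\<lambda>x. f x * indicator A x)" "(\<integral>x. f x * indicator A x \<partial>M) = (\<integral>x. h x \<partial>M)"
proof -
  define f' where "f' = (\<lambda>x. max (f x) 0)"
  have f'F[measurable]: "f' \<in> borel_measurable (sigX M X N)" unfolding f'_def by measurable
  have fM[measurable]: "f \<in> borel_measurable M" by (rule measurable_from_subalg[OF subalgF f])
  have f'M[measurable]: "f' \<in> borel_measurable M" unfolding f'_def by measurable
  have hM[measurable]: "h \<in> borel_measurable M" using h by auto
  have ff': "AE x in M. f x = f' x" using fpos by eventually_elim (auto simp: f'_def)
  have hpos: "AE x in M. 0 \<le> h x" using fpos fh E_nonneg[OF A] by eventually_elim (metis mult_nonneg_nonneg)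
  have "(\<integral>\<^sup>+x. ennreal (f' x * indicator A x) \<partial>M) = (\<integral>\<^sup>+x. ennreal (f' x) * ennreal (indicator A x) \<partial>M)"
    by (intro nn_integral_cong) (auto simp: f'_def ennreal_mult)
  also have "\<dots> = (\<integral>\<^sup>+x. ennreal (f' x) * nn_cond_exp M (sigX M X N) (\<lambda>x. ennreal (indicator A x)) x \<partial>M)"
    by (rule F.nn_cond_exp_intg[symmetric]) auto
  also have "\<dots> = (\<integral>\<^sup>+x. ennreal (h x) \<partial>M)"
    apply (intro nn_integral_cong_AE)
    using nn_E[OF A] ff' fh E_nonneg[OF A] by eventually_elim (auto simp: f'_def ennreal_mult[symmetric])
  finally have eq: "(\<integral>\<^sup>+x. ennreal (f' x * indicator A x) \<partial>M) = (\<integral>\<^sup>+x. ennreal (h x) \<partial>M)" .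
  have fin: "(\<integral>\<^sup>+x. ennreal (h x) \<partial>M) < \<infinity>"
    using integrableD(2)[OF h] by (simp add: less_top)
  have int': "integrable M (\<lambda>x. f' x * indicator A x)"
    apply (rule integrableI_nonneg) using eq fin by (auto simp: f'_def)
  have ae': "AE x in M. f x * indicator A x = f' x * indicator A x" using ff' by eventually_elim simp
  show "integrable M (\<lambda>x. f x * indicator A x)"
    using integrable_cong_AE[OF _ _ ae'] int' by simp
  have "(\<integral>x. f x * indicator A x \<partial>M) = (\<integral>x. f' x * indicator A x \<partial>M)"
    by (intro integral_cong_AE ae') auto
  also have "\<dots> = enn2real (\<integral>\<^sup>+x. ennreal (f' x * indicator A x) \<partial>M)"
    by (rule integral_eq_nn_integral) (auto simp: f'_def)
  also have "\<dots> = (\<integral>x. h x \<partial>M)"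
    unfolding eq by (rule integral_eq_nn_integral[symmetric]) (auto simp: hpos)
  finally show "(\<integral>x. f x * indicator A x \<partial>M) = (\<integral>x. h x \<partial>M)" .
qed


lemma ev_meas[measurable]: "Z \<in> measurable M (count_space UNIV) \<Longrightarrow> ev M Z k \<in> sets M"
proof -
  assume Z: "Z \<in> measurable M (count_space UNIV)"
  have "ev M Z k = Z -` {k} \<inter> space M" by (auto simp: ev_def)
  then show ?thesis using measurable_sets[OF Z, of "{k}"] by simp
qed

lemma evV_meas[measurable]: "V \<in> borel_measurable M \<Longrightarrow> ev M V (r::real) \<in> sets M"
  unfolding ev_def by measurable

lemma Ssel_meas[measurable]: "Y \<in> measurable M (count_space UNIV) \<Longrightarrow> Ssel M Y \<in> sets M"
proof -
  assume Z: "Y \<in> measurable M (count_space UNIV)"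
  have "Ssel M Y = Y -` (UNIV - {0}) \<inter> space M" by (auto simp: Ssel_def)
  then show ?thesis using measurable_sets[OF Z, of "UNIV - {0}"] by simp
qed

lemma ratio_eq: "0 \<le> (a::real) \<Longrightarrow> a \<le> q \<Longrightarrow> a \<le> s \<Longrightarrow> (a/q)/(b/q) = (a/s)/(b/s)"
  by (cases "q = 0"; cases "s = 0") auto

lemma div_div_cancel: "(s::real) \<noteq> 0 \<Longrightarrow> n / d = (n/s)/(d/s)"
  by simp

lemma part1:
  fixes V :: "'a \<Rightarrow> real" and Y :: "'a \<Rightarrow> nat"
  assumes V_meas[measurable]: "V \<in> borel_measurable M"
    and Y_meas[measurable]: "Y \<in> measurable M (count_space UNIV)"
    and S_pos: "measure M (Ssel M Y) > 0"
  shows "Psi_om M X N V Y = Psi_om_star M X N V Y"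
proof -
  let ?a = "E (ev M Y 2 \<inter> ev M V 0)"
  let ?q = "E (ev M V 0)"
  let ?s = "E (Ssel M Y \<inter> ev M V 0)"
  let ?b = "E (ev M Y 1 \<inter> ev M V 0)"
  have s2: "ev M Y 2 \<inter> (Ssel M Y \<inter> ev M V 0) = ev M Y 2 \<inter> ev M V 0"
    by (auto simp: ev_def Ssel_def)
  have s1: "ev M Y 1 \<inter> (Ssel M Y \<inter> ev M V 0) = ev M Y 1 \<inter> ev M V 0"
    by (auto simp: ev_def Ssel_def)
  have m1: "ev M Y 2 \<inter> ev M V 0 \<in> sets M" "ev M V 0 \<in> sets M" "Ssel M Y \<inter> ev M V 0 \<in> sets M"
    by measurable
  note m2 = m1(2) note m3 = m1(3)
  have sub1: "ev M Y 2 \<inter> ev M V 0 \<subseteq> ev M V 0" by auto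
  have sub2: "ev M Y 2 \<inter> ev M V 0 \<subseteq> Ssel M Y \<inter> ev M V 0" by (auto simp: ev_def Ssel_def)
  have ae: "AE x in M. (?a x / ?q x) / (?b x / ?q x) = (?a x / ?s x) / (?b x / ?s x)"
    using E_nonneg[of "ev M Y 2 \<inter> ev M V 0", OF m1(1)] E_mono[of "ev M Y 2 \<inter> ev M V 0" "ev M V 0", OF m1(1) m2 sub1]
      E_mono[of "ev M Y 2 \<inter> ev M V 0" "Ssel M Y \<inter> ev M V 0", OF m1(1) m3 sub2]
    by eventually_elim (auto intro!: ratio_eq simp: ev_def Ssel_def)
  have num: "(\<integral>\<omega>. V \<omega> * indicator (ev M Y 2) \<omega> * indicator (Ssel M Y) \<omega> \<partial>M)
      = (\<integral>\<omega>. V \<omega> * indicator (ev M Y 2) \<omega> \<partial>M)"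
    by (intro Bochner_Integration.integral_cong refl) (auto simp: indicator_def ev_def Ssel_def)
  have den: "(\<integral>\<omega>. V \<omega> * indicator (ev M Y 1) \<omega> * (?a \<omega> / ?s \<omega> / (?b \<omega> / ?s \<omega>)) * indicator (Ssel M Y) \<omega> \<partial>M)
      = (\<integral>\<omega>. V \<omega> * indicator (ev M Y 1) \<omega> * (?a \<omega> / ?q \<omega> / (?b \<omega> / ?q \<omega>)) \<partial>M)"
  proof -
    have "(\<integral>\<omega>. V \<omega> * indicator (ev M Y 1) \<omega> * (?a \<omega> / ?s \<omega> / (?b \<omega> / ?s \<omega>)) * indicator (Ssel M Y) \<omega> \<partial>M)
      = (\<integral>\<omega>. V \<omega> * indicator (ev M Y 1) \<omega> * (?a \<omega> / ?s \<omega> / (?b \<omega> / ?s \<omega>)) \<partial>M)"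
      by (intro Bochner_Integration.integral_cong refl) (auto simp: indicator_def ev_def Ssel_def)
    also have "\<dots> = (\<integral>\<omega>. V \<omega> * indicator (ev M Y 1) \<omega> * (?a \<omega> / ?q \<omega> / (?b \<omega> / ?q \<omega>)) \<partial>M)"
      by (intro integral_cong_AE) (use ae in \<open>auto elim!: eventually_mono\<close>)
    finally show ?thesis .
  qed
  show ?thesis
    unfolding Psi_om_def Psi_om_star_def cexp_ev_def cprobX_def s1 s2
    using num den S_pos by simp
qed


lemma part2:
  fixes V :: "'a \<Rightarrow> real" and Y :: "'a \<Rightarrow> nat"
  assumes V_meas[measurable]: "V \<in> borel_measurable M"
    and Y_meas[measurable]: "Y \<in> measurable M (count_space UNIV)"
    and S_pos: "measure M (Ssel M Y) > 0"
  shows "Psi_ipw M X N V Y = Psi_ipw_star M X N V Y"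
proof -
  have s1: "Ssel M Y \<inter> ev M Y 1 = ev M Y 1"
    by (auto simp: ev_def Ssel_def)
  have num: "(\<integral>\<omega>. V \<omega> * indicator (ev M Y 2) \<omega> * indicator (Ssel M Y) \<omega> \<partial>M)
      = (\<integral>\<omega>. V \<omega> * indicator (ev M Y 2) \<omega> \<partial>M)"
    by (intro Bochner_Integration.integral_cong refl) (auto simp: indicator_def ev_def Ssel_def)
  have den: "\<And>R. (\<integral>\<omega>. (1 - V \<omega>) * indicator (ev M Y 2) \<omega> * R \<omega> * indicator (Ssel M Y) \<omega> \<partial>M)
      = (\<integral>\<omega>. (1 - V \<omega>) * indicator (ev M Y 2) \<omega> * R \<omega> \<partial>M)"
    by (intro Bochner_Integration.integral_cong refl) (auto simp: indicator_def ev_def Ssel_def)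
  show ?thesis
    unfolding Psi_ipw_def Psi_ipw_star_def cexp_ev_def s1 num
      den[of "\<lambda>\<omega>. cprobX M X N (ev M V 1) (ev M Y 1) \<omega> / cprobX M X N (ev M V 0) (ev M Y 1) \<omega>"]
    using S_pos by (intro div_div_cancel) auto
qed


lemma part3:
  fixes V :: "'a \<Rightarrow> real" and Y Y0 Y1 :: "'a \<Rightarrow> nat"
  assumes V_meas[measurable]: "V \<in> borel_measurable M"
    and Y_meas[measurable]: "Y \<in> measurable M (count_space UNIV)"
    and Y0_meas[measurable]: "Y0 \<in> measurable M (count_space UNIV)"
    and Y1_meas[measurable]: "Y1 \<in> measurable M (count_space UNIV)"
    and V_bin: "\<And>\<omega>. \<omega> \<in> space M \<Longrightarrow> V \<omega> \<in> {0, 1}"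
    and A1a: "\<forall>\<omega>\<in>space M. V \<omega> = 0 \<longrightarrow> Y \<omega> = Y0 \<omega>"
    and A1b: "\<forall>\<omega>\<in>space M. V \<omega> = 1 \<longrightarrow> Y \<omega> = Y1 \<omega>"
    and A2: "AE \<omega> in M. cprobX M X N (ev M Y0 1) (ev M V 1) \<omega> = cprobX M X N (ev M Y1 1) (ev M V 1) \<omega>"
    and A3: "AE \<omega> in M. OR M X N V Y0 2 \<omega> = OR M X N V Y0 1 \<omega>"
    and mv: "measure M (ev M V 1) > 0"
    and P1: "AE \<omega> in M. cprobX M X N (ev M Y0 0) (ev M V 1) \<omega> > 0"
    and P2: "AE \<omega> in M. cprobX M X N (ev M Y0 0) (ev M V 0) \<omega> > 0"
    and P3: "AE \<omega> in M. cprobX M X N (ev M Y0 1) (ev M V 0) \<omega> > 0"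
    and P4: "AE \<omega> in M. cprobX M X N (ev M Y0 2) (ev M V 0) \<omega> > 0"
    and P5: "AE \<omega> in M. cprobX M X N (ev M V 0) (ev M Y 1) \<omega> > 0"
  shows "Psi M V Y0 Y1 = Psi_om M X N V Y \<and> Psi M V Y0 Y1 = Psi_ipw M X N V Y"
proof -
  have sY0: "\<And>y. ev M Y0 y \<inter> ev M V 0 = ev M Y y \<inter> ev M V 0"
    using A1a by (auto simp: ev_def)
  have sY1: "\<And>y. ev M Y1 y \<inter> ev M V 1 = ev M Y y \<inter> ev M V 1"
    using A1b by (auto simp: ev_def)
  let ?a = "E (ev M Y 2 \<inter> ev M V 0)"
  let ?b = "E (ev M Y 1 \<inter> ev M V 0)"
  let ?q0 = "E (ev M V 0)"
  let ?r = "E (ev M Y 1 \<inter> ev M V 1)"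
  let ?p2 = "E (ev M Y0 2 \<inter> ev M V 1)"
  have P2': "AE \<omega> in M. ?b \<omega> / ?q0 \<omega> > 0" using P3 unfolding cprobX_def sY0 .
  have P4': "AE \<omega> in M. ?a \<omega> / ?q0 \<omega> > 0" using P4 unfolding cprobX_def sY0 .
  have key: "AE \<omega> in M. ?p2 \<omega> = ?r \<omega> * ?a \<omega> / ?b \<omega>"
    using A2 A3 P1 P2 P3 P4 unfolding OR_def cprobX_def sY0 sY1
    by eventually_elim (rule alg)
  have m[measurable]: "ev M Y 1 \<inter> ev M V 1 \<in> sets M" "ev M Y 2 \<inter> ev M V 0 \<in> sets M"
    "ev M Y 1 \<inter> ev M V 0 \<in> sets M" "ev M V 0 \<in> sets M" "ev M Y0 2 \<inter> ev M V 1 \<in> sets M"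
    "ev M Y 2 \<inter> ev M V 1 \<in> sets M" "ev M Y 1 \<in> sets M" "ev M V 0 \<inter> ev M Y 1 \<in> sets M"
    by measurable
  have hint: "integrable M ?p2" by (intro F.real_cond_exp_int(1)) simp
  have hval: "(\<integral>\<omega>. ?p2 \<omega> \<partial>M) = measure M (ev M Y0 2 \<inter> ev M V 1)"
    by (rule E_int) (rule m(5))
  have numer: "(\<integral>\<omega>. V \<omega> * indicator (ev M Y 2) \<omega> \<partial>M) = measure M (ev M Y 2 \<inter> ev M V 1)"
  proof -
    have "(\<integral>\<omega>. V \<omega> * indicator (ev M Y 2) \<omega> \<partial>M) = (\<integral>\<omega>. indicator (ev M Y 2 \<inter> ev M V 1) \<omega> \<partial>M)"
      apply (intro Bochner_Integration.integral_cong refl)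
      subgoal for x using V_bin[of x] by (auto simp: indicator_def ev_def)
      done
    then show ?thesis by (simp add: m(6))
  qed
  have PsiEq: "Psi M V Y0 Y1 = measure M (ev M Y 2 \<inter> ev M V 1) / measure M (ev M Y0 2 \<inter> ev M V 1)"
    unfolding Psi_def cprob_def sY1 using mv by (intro div_div_cancel[symmetric]) auto
  have om_den: "(\<integral>\<omega>. V \<omega> * indicator (ev M Y 1) \<omega>
          * (cprobX M X N (ev M Y 2) (ev M V 0) \<omega> / cprobX M X N (ev M Y 1) (ev M V 0) \<omega>) \<partial>M)
        = measure M (ev M Y0 2 \<inter> ev M V 1)"
  proof -
    let ?f = "\<lambda>\<omega>. (?a \<omega> / ?q0 \<omega>) / (?b \<omega> / ?q0 \<omega>)"
    have fF: "?f \<in> borel_measurable (sigX M X N)" by measurable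
    have fpos: "AE \<omega> in M. 0 \<le> ?f \<omega>"
      using P2' P4' by eventually_elim (rule divide_nonneg_nonneg; rule less_imp_le)
    have fh: "AE \<omega> in M. ?f \<omega> * ?r \<omega> = ?p2 \<omega>"
      using P2' P4' key by eventually_elim (auto simp: field_simps)
    have "(\<integral>\<omega>. V \<omega> * indicator (ev M Y 1) \<omega>
          * (cprobX M X N (ev M Y 2) (ev M V 0) \<omega> / cprobX M X N (ev M Y 1) (ev M V 0) \<omega>) \<partial>M)
        = (\<integral>\<omega>. ?f \<omega> * indicator (ev M Y 1 \<inter> ev M V 1) \<omega> \<partial>M)"
      unfolding cprobX_def
      apply (intro Bochner_Integration.integral_cong refl)
      subgoal for x using V_bin[of x] by (auto simp: indicator_def ev_def)
      done
    also have "\<dots> = (\<integral>\<omega>. ?p2 \<omega> \<partial>M)"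
      by (rule tower(2)[OF fF fpos m(1) hint fh])
    finally show ?thesis using hval by simp
  qed
  have ipw_den: "(\<integral>\<omega>. (1 - V \<omega>) * indicator (ev M Y 2) \<omega>
          * (cprobX M X N (ev M V 1) (ev M Y 1) \<omega> / cprobX M X N (ev M V 0) (ev M Y 1) \<omega>) \<partial>M)
        = measure M (ev M Y0 2 \<inter> ev M V 1)"
  proof -
    have c: "ev M V 1 \<inter> ev M Y 1 = ev M Y 1 \<inter> ev M V 1" "ev M V 0 \<inter> ev M Y 1 = ev M Y 1 \<inter> ev M V 0"
      by blast+
    let ?e = "E (ev M Y 1)"
    let ?f = "\<lambda>\<omega>. (?r \<omega> / ?e \<omega>) / (?b \<omega> / ?e \<omega>)"
    have P5': "AE \<omega> in M. ?b \<omega> / ?e \<omega> > 0" using P5 unfolding cprobX_def c .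
    have fF: "?f \<in> borel_measurable (sigX M X N)" by measurable
    have fpos: "AE \<omega> in M. 0 \<le> ?f \<omega>"
      using P5' E_nonneg[OF m(1)] E_nonneg[OF m(7)]
      by eventually_elim (rule divide_nonneg_nonneg[OF divide_nonneg_nonneg less_imp_le])
    have fh: "AE \<omega> in M. ?f \<omega> * ?a \<omega> = ?p2 \<omega>"
      using P5' key by eventually_elim (auto simp: field_simps)
    have "(\<integral>\<omega>. (1 - V \<omega>) * indicator (ev M Y 2) \<omega>
          * (cprobX M X N (ev M V 1) (ev M Y 1) \<omega> / cprobX M X N (ev M V 0) (ev M Y 1) \<omega>) \<partial>M)
        = (\<integral>\<omega>. ?f \<omega> * indicator (ev M Y 2 \<inter> ev M V 0) \<omega> \<partial>M)"
      unfolding cprobX_def c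
      apply (intro Bochner_Integration.integral_cong refl)
      subgoal for x using V_bin[of x] by (auto simp: indicator_def ev_def)
      done
    also have "\<dots> = (\<integral>\<omega>. ?p2 \<omega> \<partial>M)"
      by (rule tower(2)[OF fF fpos m(2) hint fh])
    finally show ?thesis using hval by simp
  qed
  show ?thesis
    unfolding PsiEq Psi_om_def Psi_ipw_def numer om_den ipw_den by simp
qed

end

theorem proposition2:
  fixes M :: "'a measure" and N :: "'b measure"
    and X :: "'a \<Rightarrow> 'b" and V :: "'a \<Rightarrow> real" and Y Y0 Y1 :: "'a \<Rightarrow> nat"
  assumes P: "prob_space M"
    and X_meas: "X \<in> measurable M N"
    and V_meas: "V \<in> borel_measurable M"
    and Y_meas: "Y \<in> measurable M (count_space UNIV)"
    and Y0_meas: "Y0 \<in> measurable M (count_space UNIV)"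
    and Y1_meas: "Y1 \<in> measurable M (count_space UNIV)"
    and V_bin: "\<And>\<omega>. \<omega> \<in> space M \<Longrightarrow> V \<omega> \<in> {0, 1}"
    and Y_rng: "\<And>\<omega>. \<omega> \<in> space M \<Longrightarrow> Y \<omega> \<le> 2"
    and Y0_rng: "\<And>\<omega>. \<omega> \<in> space M \<Longrightarrow> Y0 \<omega> \<le> 2"
    and Y1_rng: "\<And>\<omega>. \<omega> \<in> space M \<Longrightarrow> Y1 \<omega> \<le> 2"
    and S_pos: "measure M (Ssel M Y) > 0"
  shows "Psi_om M X N V Y = Psi_om_star M X N V Y
       \<and> Psi_ipw M X N V Y = Psi_ipw_star M X N V Y
       \<and> ((\<comment> \<open>(A1) consistency\<close>
            (\<forall>\<omega>\<in>space M. V \<omega> = 0 \<longrightarrow> Y \<omega> = Y0 \<omega>)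
          \<and> (\<forall>\<omega>\<in>space M. V \<omega> = 1 \<longrightarrow> Y \<omega> = Y1 \<omega>)
            \<comment> \<open>(A2)\<close>
          \<and> (AE \<omega> in M. cprobX M X N (ev M Y0 1) (ev M V 1) \<omega>
                        = cprobX M X N (ev M Y1 1) (ev M V 1) \<omega>)
            \<comment> \<open>(A3) odds ratio equi-confounding\<close>
          \<and> (AE \<omega> in M. OR M X N V Y0 2 \<omega> = OR M X N V Y0 1 \<omega>)
            \<comment> \<open>(A4) positivity of the denominators\<close>
          \<and> measure M (ev M V 1) > 0
          \<and> measure M (ev M Y0 2 \<inter> ev M V 1) > 0
          \<and> (AE \<omega> in M. cprobX M X N (ev M Y0 0) (ev M V 1) \<omega> > 0)
          \<and> (AE \<omega> in M. cprobX M X N (ev M Y0 0) (ev M V 0) \<omega> > 0)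
          \<and> (AE \<omega> in M. cprobX M X N (ev M Y0 1) (ev M V 0) \<omega> > 0)
          \<and> (AE \<omega> in M. cprobX M X N (ev M Y0 2) (ev M V 0) \<omega> > 0)
          \<and> (AE \<omega> in M. cprobX M X N (ev M V 0) (ev M Y 1) \<omega> > 0))
         \<longrightarrow> Psi M V Y0 Y1 = Psi_om_star M X N V Y
           \<and> Psi M V Y0 Y1 = Psi_ipw_star M X N V Y)"
  proof -
  interpret C: ctx M X N by (intro ctx.intro ctx_axioms.intro P X_meas)
  have 1: "Psi_om M X N V Y = Psi_om_star M X N V Y" by (rule C.part1[OF V_meas Y_meas S_pos])
  have 2: "Psi_ipw M X N V Y = Psi_ipw_star M X N V Y" by (rule C.part2[OF V_meas Y_meas S_pos])
  show ?thesis
  proof (intro conjI 1 2 impI)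
    assume H: "(\<forall>\<omega>\<in>space M. V \<omega> = 0 \<longrightarrow> Y \<omega> = Y0 \<omega>)
          \<and> (\<forall>\<omega>\<in>space M. V \<omega> = 1 \<longrightarrow> Y \<omega> = Y1 \<omega>)
          \<and> (AE \<omega> in M. cprobX M X N (ev M Y0 1) (ev M V 1) \<omega>
                        = cprobX M X N (ev M Y1 1) (ev M V 1) \<omega>)
          \<and> (AE \<omega> in M. OR M X N V Y0 2 \<omega> = OR M X N V Y0 1 \<omega>)
          \<and> measure M (ev M V 1) > 0
          \<and> measure M (ev M Y0 2 \<inter> ev M V 1) > 0
          \<and> (AE \<omega> in M. cprobX M X N (ev M Y0 0) (ev M V 1) \<omega> > 0)
          \<and> (AE \<omega> in M. cprobX M X N (ev M Y0 0) (ev M V 0) \<omega> > 0)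
          \<and> (AE \<omega> in M. cprobX M X N (ev M Y0 1) (ev M V 0) \<omega> > 0)
          \<and> (AE \<omega> in M. cprobX M X N (ev M Y0 2) (ev M V 0) \<omega> > 0)
          \<and> (AE \<omega> in M. cprobX M X N (ev M V 0) (ev M Y 1) \<omega> > 0)"
    then have 3: "Psi M V Y0 Y1 = Psi_om M X N V Y \<and> Psi M V Y0 Y1 = Psi_ipw M X N V Y"
      by (elim conjE, intro C.part3[OF V_meas Y_meas Y0_meas Y1_meas V_bin]) auto
    show "Psi M V Y0 Y1 = Psi_om_star M X N V Y" using 1 3 by simp
    show "Psi M V Y0 Y1 = Psi_ipw_star M X N V Y" using 2 3 by simp
  qed
qed

end
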